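(* Let $\mathcal{A}$ be a graded algebra and $(C,d)$ a differential graded $\mathcal{A}$-module (an $\mathcal{A}$-differential space, $\mathcal{A}$ acting compatibly with $d$). Suppose $H_1\colon C\to C$ is an $\mathcal{A}$-equivariant homotopy operator between the identity and some $\mathcal{A}$-equivariant projection $\Pi_1\colon C\to C$ onto a differential subspace $C'\subset C$, i.e. $[d,H_1]=I-\Pi_1$, and suppose that a cochain map $\Pi\colon C\to C$ is another $\mathcal{A}$-equivariant projection onto $C'$. Then $H=(I-\Pi_1-\Pi)H_1(I-\Pi_1-\Pi)$ is an $\mathcal{A}$-equivariant homotopy between $I$ and $\Pi$, i.e. $[d,H]=I-\Pi$.
   Context: $[d,H]=dH+Hd$ for an odd operator $H$ (graded commutator). $\mathcal{A}$ carries the trivial differential. *)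

theory Defs
  imports Complex_Main
begin

definition lin_subspace :: "('k::field \<Rightarrow> 'v::ab_group_add \<Rightarrow> 'v) \<Rightarrow> 'v set \<Rightarrow> bool" where
  "lin_subspace s S \<longleftrightarrow> 0 \<in> S \<and> (\<forall>x\<in>S. \<forall>y\<in>S. x + y \<in> S) \<and> (\<forall>c. \<forall>x\<in>S. s c x \<in> S)"

definition graded_decomp :: "('k::field \<Rightarrow> 'v::ab_group_add \<Rightarrow> 'v) \<Rightarrow> (int \<Rightarrow> 'v set) \<Rightarrow> bool" where
  "graded_decomp s V \<longleftrightarrow> vector_space s \<and> (\<forall>n. lin_subspace s (V n)) \<and>
     (\<forall>x. \<exists>!f. finite {n. f n \<noteq> 0} \<and> (\<forall>n. f n \<in> V n) \<and> x = (\<Sum>n\<in>{n. f n \<noteq> 0}. f n))"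

definition graded_algebra :: "('k::field \<Rightarrow> 'a::ring \<Rightarrow> 'a) \<Rightarrow> (int \<Rightarrow> 'a set) \<Rightarrow> bool" where
  "graded_algebra sA Adeg \<longleftrightarrow> graded_decomp sA Adeg \<and>
     (\<forall>c a b. sA c (a * b) = sA c a * b \<and> sA c (a * b) = a * sA c b) \<and>
     (\<forall>p q a b. a \<in> Adeg p \<longrightarrow> b \<in> Adeg q \<longrightarrow> a * b \<in> Adeg (p + q))"

definition graded_action ::
  "('k::field \<Rightarrow> 'a::ring \<Rightarrow> 'a) \<Rightarrow> (int \<Rightarrow> 'a set) \<Rightarrow> ('k \<Rightarrow> 'c::ab_group_add \<Rightarrow> 'c) \<Rightarrow> (int \<Rightarrow> 'c set)
    \<Rightarrow> ('a \<Rightarrow> 'c \<Rightarrow> 'c) \<Rightarrow> bool" where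
  "graded_action sA Adeg sC Cdeg act \<longleftrightarrow> graded_algebra sA Adeg \<and> graded_decomp sC Cdeg \<and>
     (\<forall>a. Vector_Spaces.linear sC sC (act a)) \<and>
     (\<forall>x. Vector_Spaces.linear sA sC (\<lambda>a. act a x)) \<and>
     (\<forall>a b x. act (a * b) x = act a (act b x)) \<and>
     (\<forall>p n a x. a \<in> Adeg p \<longrightarrow> x \<in> Cdeg n \<longrightarrow> act a x \<in> Cdeg (n + p))"

definition homogeneous_op :: "('k::field \<Rightarrow> 'c::ab_group_add \<Rightarrow> 'c) \<Rightarrow> (int \<Rightarrow> 'c set) \<Rightarrow> ('c \<Rightarrow> 'c) \<Rightarrow> int \<Rightarrow> bool" where
  "homogeneous_op sC Cdeg T k \<longleftrightarrow> Vector_Spaces.linear sC sC T \<and> (\<forall>n x. x \<in> Cdeg n \<longrightarrow> T x \<in> Cdeg (n + k))"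

definition equivariant :: "(int \<Rightarrow> 'a set) \<Rightarrow> ('a \<Rightarrow> 'c::ab_group_add \<Rightarrow> 'c) \<Rightarrow> ('c \<Rightarrow> 'c) \<Rightarrow> int \<Rightarrow> bool" where
  "equivariant Adeg act T k \<longleftrightarrow>
     (\<forall>p a x. a \<in> Adeg p \<longrightarrow> T (act a x) = (if even (p * k) then act a (T x) else - act a (T x)))"

definition dg_module ::
  "('k::field \<Rightarrow> 'a::ring \<Rightarrow> 'a) \<Rightarrow> (int \<Rightarrow> 'a set) \<Rightarrow> ('k \<Rightarrow> 'c::ab_group_add \<Rightarrow> 'c) \<Rightarrow> (int \<Rightarrow> 'c set)
    \<Rightarrow> ('a \<Rightarrow> 'c \<Rightarrow> 'c) \<Rightarrow> ('c \<Rightarrow> 'c) \<Rightarrow> bool" where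
  "dg_module sA Adeg sC Cdeg act d \<longleftrightarrow> graded_action sA Adeg sC Cdeg act \<and>
     homogeneous_op sC Cdeg d 1 \<and> (\<forall>x. d (d x) = 0) \<and> equivariant Adeg act d 1"

definition differential_subspace :: "('k::field \<Rightarrow> 'c::ab_group_add \<Rightarrow> 'c) \<Rightarrow> ('c \<Rightarrow> 'c) \<Rightarrow> 'c set \<Rightarrow> bool" where
  "differential_subspace sC d C' \<longleftrightarrow> lin_subspace sC C' \<and> d ` C' \<subseteq> C'"

definition projection_onto :: "('c \<Rightarrow> 'c) \<Rightarrow> 'c set \<Rightarrow> bool" where
  "projection_onto P C' \<longleftrightarrow> (\<forall>x. P (P x) = P x) \<and> range P = C'"

end

theory Submission
  imports Defs
begin

lemma add_hom_facts:
  fixes f :: "'c::ab_group_add \<Rightarrow> 'd::ab_group_add"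
  assumes "\<And>x y. f (x + y) = f x + f y"
  shows "f 0 = 0" "\<And>x. f (- x) = - f x" "\<And>x y. f (x - y) = f x - f y"
proof -
  show z: "f 0 = 0" using assms[of 0 0] by simp
  show n: "\<And>x. f (- x) = - f x" using assms z by (metis add.right_inverse add_eq_0_iff)
  show "\<And>x y. f (x - y) = f x - f y" using assms n by (metis diff_conv_add_uminus)
qed

lemma lin_add:
  assumes "Vector_Spaces.linear s1 s2 f"
  shows "f (x + y) = f x + f y" "f (s1 c x) = s2 c (f x)"
  using assms unfolding Vector_Spaces.linear_iff by auto

lemma sub_diff:
  assumes vs: "vector_space s" and S: "lin_subspace s S" and "x \<in> S" "y \<in> S"
  shows "x - y \<in> S"
proof -
  have m: "module s" using vs by (simp add: vector_space_def module_def)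
  have "s (-1) y = - y" using module.scale_minus_left[OF m, of 1 y] module.scale_one[OF m] by simp
  then have "x - y = x + s (-1) y" by simp
  thus ?thesis using S assms(3,4) unfolding lin_subspace_def by metis
qed

theorem lemma5p6:
  fixes sA :: "'k::field \<Rightarrow> 'a::ring \<Rightarrow> 'a" and Adeg :: "int \<Rightarrow> 'a set"
    and sC :: "'k \<Rightarrow> 'c::ab_group_add \<Rightarrow> 'c" and Cdeg :: "int \<Rightarrow> 'c set"
    and act :: "'a \<Rightarrow> 'c \<Rightarrow> 'c" and d H1 \<Pi>1 \<Pi> :: "'c \<Rightarrow> 'c" and C' :: "'c set"
  assumes dg: "dg_module sA Adeg sC Cdeg act d"
    and sub: "differential_subspace sC d C'"
    and H1_op: "homogeneous_op sC Cdeg H1 (-1)"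
    and H1_eq: "equivariant Adeg act H1 (-1)"
    and P1_eq: "equivariant Adeg act \<Pi>1 0"
    and P1_proj: "projection_onto \<Pi>1 C'"
    and homot: "\<forall>x. d (H1 x) + H1 (d x) = x - \<Pi>1 x"
    and P_op: "homogeneous_op sC Cdeg \<Pi> 0"
    and P_chain: "\<forall>x. d (\<Pi> x) = \<Pi> (d x)"
    and P_eq: "equivariant Adeg act \<Pi> 0"
    and P_proj: "projection_onto \<Pi> C'"
  defines "H \<equiv> (\<lambda>x. let y = H1 (x - \<Pi>1 x - \<Pi> x) in y - \<Pi>1 y - \<Pi> y)"
  shows "homogeneous_op sC Cdeg H (-1) \<and> equivariant Adeg act H (-1) \<and>
         (\<forall>x. d (H x) + H (d x) = x - \<Pi> x)"
proof -
  have ga: "graded_action sA Adeg sC Cdeg act" and dop: "homogeneous_op sC Cdeg d 1"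
    and dd: "\<And>x. d (d x) = 0"
    using dg unfolding dg_module_def by auto
  have gd: "graded_decomp sC Cdeg" and actlin: "\<And>a. Vector_Spaces.linear sC sC (act a)"
    using ga unfolding graded_action_def by auto
  have vs: "vector_space sC" and subs: "\<And>n. lin_subspace sC (Cdeg n)"
    using gd unfolding graded_decomp_def by auto
  have mC: "module sC" using vs by (simp add: vector_space_def module_def)
  have sCdiff: "\<And>c x y. sC c (x - y) = sC c x - sC c y" using module.scale_right_diff_distrib[OF mC] by blast
  have dlin: "Vector_Spaces.linear sC sC d" using dop unfolding homogeneous_op_def by auto
  have Hlin: "Vector_Spaces.linear sC sC H1" using H1_op unfolding homogeneous_op_def by auto
  have Plin: "Vector_Spaces.linear sC sC \<Pi>" using P_op unfolding homogeneous_op_def by auto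
  have dadd: "\<And>x y. d (x + y) = d x + d y" using lin_add(1)[OF dlin] .
  note dF = add_hom_facts[of d, OF dadd]
  have Hadd: "\<And>x y. H1 (x + y) = H1 x + H1 y" using lin_add(1)[OF Hlin] .
  note HF = add_hom_facts[of H1, OF Hadd]
  have Padd: "\<And>x y. \<Pi> (x + y) = \<Pi> x + \<Pi> y" using lin_add(1)[OF Plin] .
  note PF = add_hom_facts[of "\<Pi>", OF Padd]
  have P1def: "\<Pi>1 x = x - d (H1 x) - H1 (d x)" for x
  proof -
    have "\<Pi>1 x = x - (x - \<Pi>1 x)" by simp
    also have "x - \<Pi>1 x = d (H1 x) + H1 (d x)" using homot by simp
    finally show ?thesis by (simp add: diff_diff_eq)
  qed
  have P1add: "\<And>x y. \<Pi>1 (x + y) = \<Pi>1 x + \<Pi>1 y"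
    unfolding P1def by (simp add: dadd Hadd algebra_simps)
  note P1F = add_hom_facts[of "\<Pi>1", OF P1add]
  have P1P: "\<And>x. \<Pi>1 (\<Pi> x) = \<Pi> x"
  proof -
    fix x
    have "\<Pi> x \<in> range \<Pi>1" using P_proj P1_proj unfolding projection_onto_def by auto
    then obtain z where "\<Pi> x = \<Pi>1 z" by auto
    thus "\<Pi>1 (\<Pi> x) = \<Pi> x" using P1_proj unfolding projection_onto_def by auto
  qed
  have PP1: "\<And>x. \<Pi> (\<Pi>1 x) = \<Pi>1 x"
  proof -
    fix x
    have "\<Pi>1 x \<in> range \<Pi>" using P_proj P1_proj unfolding projection_onto_def by auto
    then obtain z where "\<Pi>1 x = \<Pi> z" by auto
    thus "\<Pi> (\<Pi>1 x) = \<Pi>1 x" using P_proj unfolding projection_onto_def by auto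
  qed
  have dP1: "\<And>x. d (\<Pi>1 x) = \<Pi>1 (d x)"
    unfolding P1def by (simp add: dF HF dd)
  define Q where "Q = (\<lambda>x. x - \<Pi>1 x - \<Pi> x)"
  have Hq: "H = (\<lambda>x. Q (H1 (Q x)))" unfolding H_def Q_def by (simp add: Let_def)
  have Qadd: "\<And>x y. Q (x + y) = Q x + Q y" unfolding Q_def by (simp add: P1add lin_add[OF Plin] algebra_simps)
  note QF = add_hom_facts[of Q, OF Qadd]
  have dQ: "\<And>x. d (Q x) = Q (d x)" unfolding Q_def by (simp add: dF dP1 P_chain)
  have P1Q: "\<And>x. \<Pi>1 (Q x) = - \<Pi> x" unfolding Q_def
    using P1_proj unfolding projection_onto_def by (simp add: P1F P1P)
  have QP1: "\<And>x. Q (x - \<Pi>1 x) = x - \<Pi> x" unfolding Q_def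
    using P1_proj P_proj unfolding projection_onto_def by (simp add: P1F PF PP1)
  have part3: "\<forall>x. d (H x) + H (d x) = x - \<Pi> x"
  proof
    fix x
    have "d (H x) + H (d x) = Q (d (H1 (Q x)) + H1 (d (Q x)))"
      unfolding Hq by (simp add: dQ Qadd)
    also have "\<dots> = Q (Q x - \<Pi>1 (Q x))" using homot by simp
    also have "Q x - \<Pi>1 (Q x) = x - \<Pi>1 x" unfolding P1Q by (simp add: Q_def)
    finally show "d (H x) + H (d x) = x - \<Pi> x" using QP1 by simp
  qed
  have P1lin: "Vector_Spaces.linear sC sC \<Pi>1"
    unfolding Vector_Spaces.linear_iff using vs P1add
    by (simp add: P1def lin_add[OF dlin] lin_add[OF Hlin] sCdiff)
  have Qlin: "Vector_Spaces.linear sC sC Q"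
    unfolding Vector_Spaces.linear_iff using vs Qadd
    by (simp add: Q_def lin_add[OF P1lin] lin_add[OF Plin] sCdiff)
  have Hlin2: "Vector_Spaces.linear sC sC H"
    unfolding Vector_Spaces.linear_iff using vs by (simp add: Hq lin_add[OF Qlin] lin_add[OF Hlin])
  have P1deg: "\<And>n x. x \<in> Cdeg n \<Longrightarrow> \<Pi>1 x \<in> Cdeg n"
  proof -
    fix n x assume x: "x \<in> Cdeg n"
    have a: "d (H1 x) \<in> Cdeg n" using x H1_op dop unfolding homogeneous_op_def
      by (metis add.commute diff_add_cancel diff_minus_eq_add)
    have b: "H1 (d x) \<in> Cdeg n" using x H1_op dop unfolding homogeneous_op_def
      by (metis add.commute add_diff_cancel_left' diff_minus_eq_add)
    show "\<Pi>1 x \<in> Cdeg n" unfolding P1def using x a b sub_diff[OF vs subs] by blast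
  qed
  have Qdeg: "\<And>n x. x \<in> Cdeg n \<Longrightarrow> Q x \<in> Cdeg n"
    unfolding Q_def using P1deg P_op sub_diff[OF vs subs] unfolding homogeneous_op_def by fastforce
  have part1: "homogeneous_op sC Cdeg H (-1)"
    unfolding homogeneous_op_def using Hlin2 Qdeg H1_op unfolding homogeneous_op_def Hq by blast
  have actD: "act a (x - y) = act a x - act a y" for a x y
    by (rule add_hom_facts(3)[of "act a", OF lin_add(1)[OF actlin]])
  have actQ: "\<And>a x. a \<in> Adeg p \<Longrightarrow> Q (act a x) = act a (Q x)" for p
    using P1_eq P_eq unfolding equivariant_def Q_def
    by (simp add: actD)
  have part2: "equivariant Adeg act H (-1)"
    unfolding equivariant_def
  proof (intro allI impI)
    fix p a x assume a: "a \<in> Adeg p"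
    have "H (act a x) = Q (H1 (act a (Q x)))" unfolding Hq using actQ[OF a] by simp
    also have "\<dots> = (if even (p * - 1) then act a (H x) else - act a (H x))"
      using H1_eq a unfolding equivariant_def Hq by (simp add: actQ[OF a] QF)
    finally show "H (act a x) = (if even (p * - 1) then act a (H x) else - act a (H x))" .
  qed
  show ?thesis using part1 part2 part3 by blast
qed

end
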